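(* Let $A$ be a non-abelian subalgebra of the matrix metabelian Lie algebra $M_{I,\Lambda}$. Then $\mathrm{Fit}(A)=\{(f,u)\in A : f=0\}$.
   Context: For sets $I,\Lambda$ and a field $k$, let $R=k[x_\alpha:\alpha\in\Lambda]$ and $T$ the free $R$-module with basis $\{u_i:i\in I\}$. $M_{I,\Lambda}$ is the set of pairs $(f,u)$, $f\in R$, $u\in T$ (matrices $\begin{pmatrix} f&u\\0&0\end{pmatrix}$), with componentwise addition and scalar multiplication and product $(f,u)\circ(g,v)=(0,ug-vf)$; it is a metabelian Lie $k$-algebra. $\mathrm{Fit}(A)$ is the ideal of $A$ generated by all elements lying in nilpotent ideals of $A$. *)

theory Defs
  imports Main "HOL-Library.Poly_Mapping" "HOL-Library.Product_Plus"
begin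

text \<open>Polynomials k[x_alpha : alpha in Lambda] are finitely supported maps from
  monomials (finitely supported exponent vectors) to coefficients; the variables
  actually used are restricted to the set Lambda.\<close>

type_synonym ('lam, 'k) mpoly = "('lam \<Rightarrow>\<^sub>0 nat) \<Rightarrow>\<^sub>0 'k"

text \<open>Elements (f,u) of M_{I,Lambda}: f in R, u in T (free R-module on basis u_i, i in I,
  represented as finitely supported coefficient maps I -> R).\<close>

type_synonym ('i, 'lam, 'k) melem = "('lam, 'k) mpoly \<times> ('i \<Rightarrow>\<^sub>0 ('lam, 'k) mpoly)"

definition polys_in :: "'lam set \<Rightarrow> ('lam, 'k::zero) mpoly set" where
  "polys_in \<Lambda> = {p :: ('lam, 'k) mpoly. \<forall>m \<in> Poly_Mapping.keys p. Poly_Mapping.keys m \<subseteq> \<Lambda>}"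

definition module_in :: "'i set \<Rightarrow> 'lam set \<Rightarrow> ('i \<Rightarrow>\<^sub>0 ('lam, 'k::zero) mpoly) set" where
  "module_in I \<Lambda> = {u. Poly_Mapping.keys u \<subseteq> I \<and> (\<forall>i. Poly_Mapping.lookup u i \<in> polys_in \<Lambda>)}"

definition M_carrier :: "'i set \<Rightarrow> 'lam set \<Rightarrow> ('i, 'lam, 'k::zero) melem set" where
  "M_carrier I \<Lambda> = polys_in \<Lambda> \<times> module_in I \<Lambda>"

definition tsmul :: "('i \<Rightarrow>\<^sub>0 ('lam, 'k::comm_ring_1) mpoly) \<Rightarrow> ('lam, 'k) mpoly
    \<Rightarrow> ('i \<Rightarrow>\<^sub>0 ('lam, 'k) mpoly)" where
  "tsmul u g = Poly_Mapping.map (\<lambda>r. r * g) u"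

definition kscal :: "'k::comm_ring_1 \<Rightarrow> ('i, 'lam, 'k) melem \<Rightarrow> ('i, 'lam, 'k) melem" where
  "kscal c x = (Poly_Mapping.single 0 c * fst x,
                Poly_Mapping.map (\<lambda>r. Poly_Mapping.single 0 c * r) (snd x))"

definition mbr :: "('i, 'lam, 'k::comm_ring_1) melem \<Rightarrow> ('i, 'lam, 'k) melem \<Rightarrow> ('i, 'lam, 'k) melem" where
  "mbr x y = (0, tsmul (snd x) (fst y) - tsmul (snd y) (fst x))"

definition ksubspace :: "('i, 'lam, 'k::comm_ring_1) melem set \<Rightarrow> bool" where
  "ksubspace W \<longleftrightarrow> 0 \<in> W \<and> (\<forall>x\<in>W. \<forall>y\<in>W. x + y \<in> W) \<and> (\<forall>c. \<forall>x\<in>W. kscal c x \<in> W)"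

definition kspan :: "('i, 'lam, 'k::comm_ring_1) melem set \<Rightarrow> ('i, 'lam, 'k) melem set" where
  "kspan S = \<Inter>{W. ksubspace W \<and> S \<subseteq> W}"

definition subalgebra :: "'i set \<Rightarrow> 'lam set \<Rightarrow> ('i, 'lam, 'k::field) melem set \<Rightarrow> bool" where
  "subalgebra I \<Lambda> A \<longleftrightarrow> A \<subseteq> M_carrier I \<Lambda> \<and> ksubspace A \<and> (\<forall>x\<in>A. \<forall>y\<in>A. mbr x y \<in> A)"

definition non_abelian :: "('i, 'lam, 'k::comm_ring_1) melem set \<Rightarrow> bool" where
  "non_abelian A \<longleftrightarrow> (\<exists>x\<in>A. \<exists>y\<in>A. mbr x y \<noteq> 0)"

definition lie_ideal :: "('i, 'lam, 'k::comm_ring_1) melem set \<Rightarrow> ('i, 'lam, 'k) melem set \<Rightarrow> bool" where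
  "lie_ideal A J \<longleftrightarrow> J \<subseteq> A \<and> ksubspace J \<and> (\<forall>a\<in>A. \<forall>j\<in>J. mbr a j \<in> J)"

text \<open>Lower central series J^1 = J, J^(n+1) = [J, J^n] (index shifted by one).\<close>
fun lcs :: "('i, 'lam, 'k::comm_ring_1) melem set \<Rightarrow> nat \<Rightarrow> ('i, 'lam, 'k) melem set" where
  "lcs J 0 = J"
| "lcs J (Suc n) = kspan {mbr x y | x y. x \<in> J \<and> y \<in> lcs J n}"

definition lie_nilpotent :: "('i, 'lam, 'k::comm_ring_1) melem set \<Rightarrow> bool" where
  "lie_nilpotent J \<longleftrightarrow> (\<exists>n. lcs J n \<subseteq> {0})"

definition Fit :: "('i, 'lam, 'k::comm_ring_1) melem set \<Rightarrow> ('i, 'lam, 'k) melem set" where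
  "Fit A = \<Inter>{J. lie_ideal A J \<and> \<Union>{N. lie_ideal A N \<and> lie_nilpotent N} \<subseteq> J}"

end

theory Submission
  imports Defs
begin

lemma nzd_gen:
  fixes p q :: "'m::cancel_comm_monoid_add \<Rightarrow>\<^sub>0 'k::idom"
    and \<phi> :: "'m \<Rightarrow> 'l::{linorder,ordered_cancel_comm_monoid_add}"
  assumes add: "\<And>x y. \<phi> (x + y) = \<phi> x + \<phi> y"
    and inj: "inj_on \<phi> (Poly_Mapping.keys p \<union> Poly_Mapping.keys q)"
    and "p \<noteq> 0" "q \<noteq> 0"
  shows "p * q \<noteq> 0"
proof -
  let ?F = "Poly_Mapping.keys p" and ?G = "Poly_Mapping.keys q"
  have fF: "finite ?F" "?F \<noteq> {}" "finite ?G" "?G \<noteq> {}" using assms(3,4) by (auto simp: finite_keys)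
  obtain a where a: "a \<in> ?F" "\<phi> a = Max (\<phi> ` ?F)"
  proof -
    have "Max (\<phi> ` ?F) \<in> \<phi> ` ?F" using fF by (intro Max_in) auto
    then show ?thesis using that by force
  qed
  obtain b where b: "b \<in> ?G" "\<phi> b = Max (\<phi> ` ?G)"
  proof -
    have "Max (\<phi> ` ?G) \<in> \<phi> ` ?G" using fF by (intro Max_in) auto
    then show ?thesis using that by force
  qed
  have aM: "\<phi> l \<le> \<phi> a" if "l \<in> ?F" for l using a fF that by simp
  have bM: "\<phi> l \<le> \<phi> b" if "l \<in> ?G" for l using b fF that by simp
  have key: "l = a \<and> r = b" if "l \<in> ?F" "r \<in> ?G" "l + r = a + b" for l r
  proof -
    have e: "\<phi> l + \<phi> r = \<phi> a + \<phi> b" using add that(3) by metis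
    have "\<phi> l = \<phi> a"
    proof (rule ccontr)
      assume "\<phi> l \<noteq> \<phi> a"
      then have "\<phi> l < \<phi> a" using aM[OF that(1)] by simp
      then have "\<phi> l + \<phi> r < \<phi> a + \<phi> b" using bM[OF that(2)] by (rule add_less_le_mono)
      then show False using e by simp
    qed
    then have "l = a" using inj that(1) a(1) by (auto dest: inj_onD)
    then show ?thesis using that(3) by simp
  qed
  have "Poly_Mapping.lookup (p * q) (a + b) = (\<Sum>l. Poly_Mapping.lookup p l * (\<Sum>r. Poly_Mapping.lookup q r when a + b = l + r))"
    by (rule lookup_mult)
  also have "\<dots> = (\<Sum>l. if l = a then Poly_Mapping.lookup p a * Poly_Mapping.lookup q b else 0)"
  proof (rule Sum_any.cong)
    fix l
    show "Poly_Mapping.lookup p l * (\<Sum>r. Poly_Mapping.lookup q r when a + b = l + r) = (if l = a then Poly_Mapping.lookup p a * Poly_Mapping.lookup q b else 0)"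
    proof (cases "l = a")
      case True
      have "(\<Sum>r. Poly_Mapping.lookup q r when a + b = l + r) = (\<Sum>r. if r = b then Poly_Mapping.lookup q r else 0)"
        by (rule Sum_any.cong) (auto simp: when_def True)
      then show ?thesis using True by simp
    next
      case False
      show ?thesis
      proof (cases "l \<in> ?F")
        case True
        have "(\<Sum>r. Poly_Mapping.lookup q r when a + b = l + r) = (\<Sum>r. 0)"
        proof -
          have "(Poly_Mapping.lookup q r when a + b = l + r) = 0" for r
          proof (cases "r \<in> ?G \<and> a + b = l + r")
            case True2: True
            then show ?thesis using key[of l r] True False by simp
          next
            case False
            then show ?thesis by (auto simp: when_def in_keys_iff)
          qed
          then show ?thesis by simp
        qed
        then show ?thesis using False by simp
      next
        case nF: False
        then show ?thesis using False by (simp add: in_keys_iff)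
      qed
    qed
  qed
  also have "\<dots> = Poly_Mapping.lookup p a * Poly_Mapping.lookup q b" by simp
  also have "\<dots> \<noteq> 0" using a b by (simp add: in_keys_iff)
  finally show ?thesis by auto
qed


lemma mpoly_nzd:
  fixes p q :: "('lam \<Rightarrow>\<^sub>0 nat) \<Rightarrow>\<^sub>0 'k::idom"
  assumes "p \<noteq> 0" "q \<noteq> 0"
  shows "p * q \<noteq> 0"
proof -
  define V where "V = \<Union> (Poly_Mapping.keys ` (Poly_Mapping.keys p \<union> Poly_Mapping.keys q))"
  have "finite V" unfolding V_def by (simp add: finite_keys)
  then obtain h where h: "bij_betw h {0..<card V} V" using ex_bij_betw_nat_finite by blast
  define N where "N = card V"
  define \<phi> :: "('lam \<Rightarrow>\<^sub>0 nat) \<Rightarrow> (nat \<Rightarrow>\<^sub>0 nat)" where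
    "\<phi> m = Abs_poly_mapping (\<lambda>n. if n < N then Poly_Mapping.lookup m (h n) else 0)" for m
  have lk: "Poly_Mapping.lookup (\<phi> m) = (\<lambda>n. if n < N then Poly_Mapping.lookup m (h n) else 0)" for m
  proof -
    have "finite {n. (if n < N then Poly_Mapping.lookup m (h n) else 0) \<noteq> 0}"
      by (rule finite_subset[of _ "{..<N}"]) auto
    then show ?thesis unfolding \<phi>_def by simp
  qed
  have add: "\<phi> (x + y) = \<phi> x + \<phi> y" for x y
    by (rule poly_mapping_eqI) (simp add: lk lookup_add)
  have inj: "inj_on \<phi> (Poly_Mapping.keys p \<union> Poly_Mapping.keys q)"
  proof (rule inj_onI)
    fix x y assume x: "x \<in> Poly_Mapping.keys p \<union> Poly_Mapping.keys q"
      and y: "y \<in> Poly_Mapping.keys p \<union> Poly_Mapping.keys q" and e: "\<phi> x = \<phi> y"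
    show "x = y"
    proof (rule poly_mapping_eqI)
      fix v
      show "Poly_Mapping.lookup x v = Poly_Mapping.lookup y v"
      proof (cases "v \<in> V")
        case True
        then obtain n where n: "n < N" "v = h n" using h unfolding N_def bij_betw_def by (metis atLeastLessThan_iff imageE)
        have "Poly_Mapping.lookup (\<phi> x) n = Poly_Mapping.lookup (\<phi> y) n" using e by simp
        then show ?thesis using n by (simp add: lk)
      next
        case False
        then have "v \<notin> Poly_Mapping.keys x" "v \<notin> Poly_Mapping.keys y" using x y unfolding V_def by auto
        then show ?thesis by (simp add: in_keys_iff)
      qed
    qed
  qed
  show ?thesis by (rule nzd_gen[OF add inj assms])
qed


lemma lookup_pmap: "Poly_Mapping.lookup (Poly_Mapping.map g u) i = (g (Poly_Mapping.lookup u i) when Poly_Mapping.lookup u i \<noteq> 0)"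
  by (simp add: map.rep_eq)

lemma pmap_zero: "Poly_Mapping.map g 0 = 0"
  by (rule poly_mapping_eqI) (simp add: lookup_pmap)

lemma tsmul_zero: "tsmul u 0 = 0"
  unfolding tsmul_def by (rule poly_mapping_eqI) (simp add: lookup_pmap)

lemma tsmul_nz:
  fixes v :: "'i \<Rightarrow>\<^sub>0 ('lam, 'k::field) mpoly"
  assumes "v \<noteq> 0" "f \<noteq> 0"
  shows "tsmul v f \<noteq> 0"
proof -
  obtain i where i: "Poly_Mapping.lookup v i \<noteq> 0" using assms(1) by (metis lookup_zero poly_mapping_eqI)
  have "Poly_Mapping.lookup (tsmul v f) i = Poly_Mapping.lookup v i * f"
    unfolding tsmul_def using i by (simp add: lookup_pmap)
  also have "\<dots> \<noteq> 0" using mpoly_nzd[OF i assms(2)] .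
  finally show ?thesis by auto
qed

lemma kscal_zero: "kscal c 0 = 0"
  unfolding kscal_def by (simp add: pmap_zero zero_prod_def)

lemma ksubspace_zero: "ksubspace {0}"
  unfolding ksubspace_def by (simp add: kscal_zero)

lemma kspan_sup: "S \<subseteq> kspan S"
  unfolding kspan_def by auto

lemma kspan_least: "ksubspace W \<Longrightarrow> S \<subseteq> W \<Longrightarrow> kspan S \<subseteq> W"
  unfolding kspan_def by auto

lemma fst_mbr [simp]: "fst (mbr x y) = 0"
  unfolding mbr_def by simp

theorem lemma3p1p1:
  fixes I :: "'i set" and \<Lambda> :: "'lam set" and A :: "('i, 'lam, 'k::field) melem set"
  assumes "subalgebra I \<Lambda> A" and "non_abelian A"
  shows "Fit A = {x \<in> A. fst x = 0}"
proof -
  have kA: "ksubspace A" and cA: "\<And>x y. x \<in> A \<Longrightarrow> y \<in> A \<Longrightarrow> mbr x y \<in> A"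
    using assms(1) unfolding subalgebra_def by auto
  define Z where "Z = {x \<in> A. fst x = 0}"
  have ZI: "lie_ideal A Z"
    unfolding lie_ideal_def ksubspace_def
  proof (intro conjI ballI allI)
    show "Z \<subseteq> A" unfolding Z_def by auto
    show "0 \<in> Z" using kA unfolding Z_def ksubspace_def by simp
    fix x y assume "x \<in> Z" "y \<in> Z"
    then show "x + y \<in> Z" using kA unfolding Z_def ksubspace_def by simp
  next
    fix c x assume "x \<in> Z"
    then have "x \<in> A" "fst x = 0" unfolding Z_def by auto
    then have "kscal c x \<in> A" "fst (kscal c x) = 0" using kA unfolding ksubspace_def
       apply blast
      by (simp add: kscal_def \<open>fst x = 0\<close>)
    then show "kscal c x \<in> Z" unfolding Z_def by simp
  next
    fix a j assume "a \<in> A" "j \<in> Z"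
    then show "mbr a j \<in> Z" using cA unfolding Z_def by simp
  qed
  have ZN: "lie_nilpotent Z"
    unfolding lie_nilpotent_def
  proof (rule exI[of _ 1])
    have "{mbr x y | x y. x \<in> Z \<and> y \<in> lcs Z 0} \<subseteq> {0}"
      unfolding Z_def mbr_def by (auto simp: tsmul_zero zero_prod_def)
    then show "lcs Z 1 \<subseteq> {0}" using kspan_least[OF ksubspace_zero] by simp
  qed
  obtain x y where xy: "x \<in> A" "y \<in> A" "mbr x y \<noteq> 0"
    using assms(2) unfolding non_abelian_def by auto
  define t where "t = snd (mbr x y)"
  have t0: "t \<noteq> 0" using xy(3) unfolding t_def by (metis fst_mbr prod.collapse zero_prod_def)
  have Nsub: "N \<subseteq> Z" if NI: "lie_ideal A N" and NN: "lie_nilpotent N" for N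
  proof
    fix n assume nN: "n \<in> N"
    have nA: "n \<in> A" using NI nN unfolding lie_ideal_def by auto
    show "n \<in> Z"
    proof (rule ccontr)
      assume "n \<notin> Z"
      then have f0: "fst n \<noteq> 0" using nA unfolding Z_def by auto
      have "\<exists>s\<in>lcs N k. fst s = 0 \<and> snd s \<noteq> 0" for k
      proof (induction k)
        case 0
        have "mbr (mbr x y) n \<in> N" using NI nN cA[OF xy(1,2)] unfolding lie_ideal_def by auto
        moreover have "snd (mbr (mbr x y) n) = tsmul t (fst n)"
          unfolding mbr_def[of "mbr x y"] t_def by (simp add: tsmul_zero)
        ultimately have "mbr (mbr x y) n \<in> lcs N 0" "fst (mbr (mbr x y) n) = 0" "snd (mbr (mbr x y) n) \<noteq> 0"
          using tsmul_nz[OF t0 f0] by auto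
        then show ?case by (intro bexI) auto
      next
        case (Suc k)
        then obtain s where s: "s \<in> lcs N k" "snd s \<noteq> 0" "fst s = 0" by auto
        have "mbr n s \<in> {mbr x y | x y. x \<in> N \<and> y \<in> lcs N k}" using nN s(1) by blast
        then have "mbr n s \<in> kspan {mbr x y | x y. x \<in> N \<and> y \<in> lcs N k}"
          by (rule subsetD[OF kspan_sup])
        then have m1: "mbr n s \<in> lcs N (Suc k)" by (simp only: lcs.simps(2))
        have "snd (mbr n s) = tsmul (snd n) (fst s) - tsmul (snd s) (fst n)"
          unfolding mbr_def by simp
        also have "\<dots> = - tsmul (snd s) (fst n)" using s(3) by (simp add: tsmul_zero)
        finally have m2: "snd (mbr n s) \<noteq> 0" using tsmul_nz[OF s(2) f0] by simp
        show ?case using m1 m2 by (intro bexI[OF _ m1]) simp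
      qed
      then have ex: "\<And>k. \<exists>s\<in>lcs N k. snd s \<noteq> 0" by blast
      obtain k where "lcs N k \<subseteq> {0}" using NN unfolding lie_nilpotent_def by blast
      then show False using ex[of k] by (auto simp: zero_prod_def)
    qed
  qed
  have FitZ: "Fit A \<subseteq> Z"
    unfolding Fit_def
  proof (rule Inter_lower, simp only: mem_Collect_eq, intro conjI ZI)
    show "\<Union>{N. lie_ideal A N \<and> lie_nilpotent N} \<subseteq> Z" using Nsub by blast
  qed
  have ZFit: "Z \<subseteq> Fit A"
    unfolding Fit_def
  proof (rule Inter_greatest)
    fix J assume "J \<in> {J. lie_ideal A J \<and> \<Union>{N. lie_ideal A N \<and> lie_nilpotent N} \<subseteq> J}"
    then have "\<Union>{N. lie_ideal A N \<and> lie_nilpotent N} \<subseteq> J" by simp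
    moreover have "Z \<subseteq> \<Union>{N. lie_ideal A N \<and> lie_nilpotent N}" using ZI ZN by blast
    ultimately show "Z \<subseteq> J" by blast
  qed
  show ?thesis using FitZ ZFit unfolding Z_def by blast
qed

end
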